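(* Let $n\ge1$, $d\ge2$ and fix $p$ with $1\le p\le d-1$. Let $\phi_v:\mathbf H_d\to\mathbf H_{d+1}$ be the $\mathbb Q(v)$-algebra homomorphism with $\phi_v(T_i)=T_i$ for $1\le i<p$, $\phi_v(T_p)=T_pT_{p+1}T_p^{-1}$, and $\phi_v(T_i)=T_{i+1}$ for $p<i\le d-1$. Let $\phi^{\mathbf T}_1:\mathbf T_{n,d}\to\mathbf T_{n+1,d+1}$ be the $\mathbb Q(v)$-linear map \[ [r_1,\dots,r_d]\mapsto[r_1,\dots,r_p,\,n+1,\,r_{p+1},\dots,r_d]\qquad(1\le r_k\le n). \] Then for all $x\in\mathbf T_{n,d}$ and $h\in\mathbf H_d$, $\phi^{\mathbf T}_1(x\cdot h)=\phi^{\mathbf T}_1(x)\cdot\phi_v(h)$.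
   Context: $\mathbf H_d$ is the $\mathbb Q(v)$-algebra generated by $T_1,\dots,T_{d-1}$ with relations $(T_i-v)(T_i+v^{-1})=0$, $T_iT_{i+1}T_i=T_{i+1}T_iT_{i+1}$, and $T_iT_j=T_jT_i$ for $|i-j|\ge2$ (the Hecke algebra of type $A_{d-1}$ with equal parameters, tensored up to $\mathbb Q(v)$). $\mathbf V_n$ is the $\mathbb Q(v)$-vector space with basis $e_1,\dots,e_n$, $\mathbf T_{n,d}=\mathbf V_n^{\otimes d}$, and $[r_1,\dots,r_d]:=e_{r_1}\otimes\cdots\otimes e_{r_d}$. $\mathbf T_{n,d}$ is a right $\mathbf H_d$-module via, for $1\le i\le d-1$: $[\dots,r_i,r_{i+1},\dots]\cdot T_i=[\dots,r_{i+1},r_i,\dots]$ if $r_i<r_{i+1}$; $=v[\dots,r_i,r_{i+1},\dots]$ if $r_i=r_{i+1}$; $=(v-v^{-1})[\dots,r_i,r_{i+1},\dots]+[\dots,r_{i+1},r_i,\dots]$ if $r_i>r_{i+1}$ (only positions $i,i+1$ change). The map $\phi_v$ is the edge-contraction embedding of Hecke algebras for type $A_d$ along the edge $\{p,p+1\}$ (with $s_+=p$, $s_-=p+1$), and is a well-defined algebra homomorphism. *)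

theory Defs
  imports "HOL-Computational_Algebra.Polynomial" "HOL-Computational_Algebra.Fraction_Field"
begin

(* The field Q(v) of rational functions in an indeterminate v *)
type_synonym qv = "rat poly fract"

definition vv :: qv where "vv = Fract [:0, 1:] 1"

(* Basis words [r_1,...,r_d] with 1 <= r_k <= n; vectors of T_{n,d} are coefficient
   functions on lists vanishing outside this finite set *)
definition words :: "nat \<Rightarrow> nat \<Rightarrow> nat list set" where
  "words n d = {rs. length rs = d \<and> set rs \<subseteq> {1..n}}"

definition basisvec :: "nat list \<Rightarrow> nat list \<Rightarrow> qv" where
  "basisvec r = (\<lambda>s. if s = r then 1 else 0)"

(* swap positions i, i+1 (1-indexed), i.e. list indices i-1, i *)
definition swapw :: "nat \<Rightarrow> nat list \<Rightarrow> nat list" where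
  "swapw i r = r[i - 1 := r ! i, i := r ! (i - 1)]"

definition act_basis :: "nat \<Rightarrow> nat list \<Rightarrow> nat list \<Rightarrow> qv" where
  "act_basis i r =
     (let a = r ! (i - 1); b = r ! i in
      if a < b then basisvec (swapw i r)
      else if a = b then (\<lambda>s. vv * basisvec r s)
      else (\<lambda>s. (vv - inverse vv) * basisvec r s + basisvec (swapw i r) s))"

definition actT :: "nat \<Rightarrow> nat \<Rightarrow> (nat list \<Rightarrow> qv) \<Rightarrow> nat \<Rightarrow> nat list \<Rightarrow> qv" where
  "actT n d x i = (\<lambda>s. \<Sum>r\<in>words n d. x r * act_basis i r s)"

(* Expressions for elements of H_d: generated as a Q(v)-algebra by T_i and T_i^{-1}
   (every element of H_d is represented by such an expression) *)
datatype hexp = Gen nat | GenInv nat | Scal qv | Add hexp hexp | Mul hexp hexp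

fun hwf :: "nat \<Rightarrow> hexp \<Rightarrow> bool" where
  "hwf d (Gen i) = (1 \<le> i \<and> i \<le> d - 1)"
| "hwf d (GenInv i) = (1 \<le> i \<and> i \<le> d - 1)"
| "hwf d (Scal c) = True"
| "hwf d (Add a b) = (hwf d a \<and> hwf d b)"
| "hwf d (Mul a b) = (hwf d a \<and> hwf d b)"

(* right action of H_d on T_{n,d}; T_i^{-1} = T_i - (v - v^{-1}) by the quadratic relation *)
fun hact :: "nat \<Rightarrow> nat \<Rightarrow> (nat list \<Rightarrow> qv) \<Rightarrow> hexp \<Rightarrow> nat list \<Rightarrow> qv" where
  "hact n d x (Gen i) = actT n d x i"
| "hact n d x (GenInv i) = (\<lambda>s. actT n d x i s - (vv - inverse vv) * x s)"
| "hact n d x (Scal c) = (\<lambda>s. c * x s)"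
| "hact n d x (Add a b) = (\<lambda>s. hact n d x a s + hact n d x b s)"
| "hact n d x (Mul a b) = hact n d (hact n d x a) b"

fun phiv :: "nat \<Rightarrow> hexp \<Rightarrow> hexp" where
  "phiv p (Gen i) =
     (if i < p then Gen i
      else if i = p then Mul (Mul (Gen p) (Gen (p + 1))) (GenInv p)
      else Gen (i + 1))"
| "phiv p (GenInv i) =
     (if i < p then GenInv i
      else if i = p then Mul (Mul (Gen p) (GenInv (p + 1))) (GenInv p)
      else GenInv (i + 1))"
| "phiv p (Scal c) = Scal c"
| "phiv p (Add a b) = Add (phiv p a) (phiv p b)"
| "phiv p (Mul a b) = Mul (phiv p a) (phiv p b)"

definition insw :: "nat \<Rightarrow> nat \<Rightarrow> nat list \<Rightarrow> nat list" where
  "insw n p r = take p r @ [n + 1] @ drop p r"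

definition phiT :: "nat \<Rightarrow> nat \<Rightarrow> nat \<Rightarrow> (nat list \<Rightarrow> qv) \<Rightarrow> nat list \<Rightarrow> qv" where
  "phiT n d p x = (\<lambda>s. \<Sum>r\<in>words n d. x r * basisvec (insw n p r) s)"

end

theory Submission
  imports Defs
begin

lemma finite_words: "finite (words n d)"
proof -
  have "words n d = {xs. set xs \<subseteq> {1..n} \<and> length xs = d}" by (auto simp: words_def)
  thus ?thesis using finite_lists_length_eq[of "{1..n}" d] by simp
qed

lemma sum_basis: "finite A \<Longrightarrow> u \<in> A \<Longrightarrow> (\<Sum>r\<in>A. basisvec u r * f r) = f u"
proof -
  assume "finite A" "u \<in> A"
  have "(\<Sum>r\<in>A. basisvec u r * f r) = (\<Sum>r\<in>A. if u = r then f r else 0)"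
    by (rule sum.cong) (auto simp: basisvec_def)
  thus ?thesis using \<open>finite A\<close> \<open>u \<in> A\<close> by simp
qed

lemma actT_basis: "u \<in> words N D \<Longrightarrow> actT N D (basisvec u) j = act_basis j u"
  by (simp add: actT_def fun_eq_iff finite_words sum_basis)

lemma actT_add: "actT N D (\<lambda>s. f s + g s) j = (\<lambda>s. actT N D f j s + actT N D g j s)"
  by (simp add: actT_def distrib_right sum.distrib fun_eq_iff)

lemma actT_diff: "actT N D (\<lambda>s. f s - g s) j = (\<lambda>s. actT N D f j s - actT N D g j s)"
  by (simp add: actT_def left_diff_distrib sum_subtractf fun_eq_iff)

lemma actT_scal: "actT N D (\<lambda>s. c * f s) j = (\<lambda>s. c * actT N D f j s)"
  by (simp add: actT_def sum_distrib_left mult.assoc fun_eq_iff)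

lemma phiT_basis: "u \<in> words n d \<Longrightarrow> phiT n d p (basisvec u) = basisvec (insw n p u)"
  by (simp add: phiT_def fun_eq_iff finite_words sum_basis)

lemma phiT_add: "phiT n d p (\<lambda>s. f s + g s) = (\<lambda>s. phiT n d p f s + phiT n d p g s)"
  by (simp add: phiT_def distrib_right sum.distrib fun_eq_iff)

lemma phiT_diff: "phiT n d p (\<lambda>s. f s - g s) = (\<lambda>s. phiT n d p f s - phiT n d p g s)"
  by (simp add: phiT_def left_diff_distrib sum_subtractf fun_eq_iff)

lemma phiT_scal: "phiT n d p (\<lambda>s. c * f s) = (\<lambda>s. c * phiT n d p f s)"
  by (simp add: phiT_def sum_distrib_left mult.assoc fun_eq_iff)

lemma phiT_lin: "phiT n d p (\<lambda>s. \<Sum>r\<in>A. c r * y r s) = (\<lambda>s. \<Sum>r\<in>A. c r * phiT n d p (y r) s)"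
  unfolding phiT_def fun_eq_iff
  by (auto simp: sum_distrib_right sum_distrib_left mult.assoc intro: sum.swap)

lemma hact_lin: "hact N D (\<lambda>s. \<Sum>r\<in>A. c r * y r s) g = (\<lambda>s. \<Sum>r\<in>A. c r * hact N D (y r) g s)"
proof (induction g arbitrary: y)
  case (Gen i)
  then show ?case unfolding fun_eq_iff
    by (auto simp: actT_def sum_distrib_right sum_distrib_left mult.assoc intro: sum.swap)
next
  case (GenInv i)
  then show ?case unfolding fun_eq_iff
    apply (simp add: actT_def sum_distrib_right sum_distrib_left mult.assoc right_diff_distrib
        sum_subtractf)
    apply (subst sum.swap) apply (simp add: mult_ac)
    done
next
  case (Scal c)
  then show ?case by (auto simp: fun_eq_iff sum_distrib_left mult.left_commute)
next
  case (Add a b)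
  then show ?case by (auto simp: fun_eq_iff distrib_left sum.distrib)
next
  case (Mul a b)
  then show ?case by simp
qed

definition supp :: "nat \<Rightarrow> nat \<Rightarrow> (nat list \<Rightarrow> qv) \<Rightarrow> bool" where
  "supp n d x = (\<forall>r. r \<notin> words n d \<longrightarrow> x r = 0)"

lemma supp_expand: "supp n d x \<Longrightarrow> x = (\<lambda>s. \<Sum>r\<in>words n d. x r * basisvec r s)"
  by (auto simp: supp_def fun_eq_iff basisvec_def finite_words if_distrib sum.delta cong: if_cong)

lemma set_swapw: "1 \<le> i \<Longrightarrow> i < length u \<Longrightarrow> set (swapw i u) \<subseteq> set u"
  unfolding swapw_def
  apply (rule subset_trans[OF set_update_subset_insert])
  apply (auto dest!: set_update_subset_insert[THEN subsetD])
  done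

lemma swapw_words: "u \<in> words N D \<Longrightarrow> 1 \<le> i \<Longrightarrow> i < D \<Longrightarrow> swapw i u \<in> words N D"
  using set_swapw[of i u] by (auto simp: words_def swapw_def)

lemma insw_nth_lt: "p \<le> length r \<Longrightarrow> k < p \<Longrightarrow> insw n p r ! k = r ! k"
  by (simp add: insw_def nth_append)

lemma insw_nth_ge: "p \<le> k \<Longrightarrow> k < length r \<Longrightarrow> insw n p r ! Suc k = r ! k"
  by (simp add: insw_def nth_append)

lemma insw_upd_lt: "p \<le> length r \<Longrightarrow> k < p \<Longrightarrow> insw n p (r[k:=x]) = (insw n p r)[k:=x]"
  by (simp add: insw_def take_update_swap drop_update_swap list_update_append)

lemma insw_upd_ge: "p \<le> k \<Longrightarrow> k < length r \<Longrightarrow> insw n p (r[k:=x]) = (insw n p r)[Suc k:=x]"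
  by (simp add: insw_def take_update_swap drop_update_swap list_update_append Suc_diff_le list_update_beyond)

lemma insw_words: "r \<in> words n d \<Longrightarrow> p \<le> d \<Longrightarrow> insw n p r \<in> words (n+1) (d+1)"
  unfolding words_def insw_def
  by (auto dest: in_set_takeD in_set_dropD)

lemma key_lt:
  assumes r: "r \<in> words n d" and "1 \<le> i" "i < p" "p \<le> d"
  shows "phiT n d p (act_basis i r) = act_basis i (insw n p r)"
proof -
  have len: "length r = d" using r by (simp add: words_def)
  have n1: "insw n p r ! (i - 1) = r ! (i - 1)" and n2: "insw n p r ! i = r ! i"
    using assms len by (auto intro!: insw_nth_lt)
  have sw: "swapw i (insw n p r) = insw n p (swapw i r)"
    using assms len by (simp add: swapw_def insw_upd_lt insw_nth_lt)
  have sww: "swapw i r \<in> words n d" using swapw_words[OF r, of i] assms by simp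
  show ?thesis
    unfolding act_basis_def Let_def n1 n2 sw
    using r sww by (simp add: phiT_basis phiT_scal phiT_add)
qed

lemma key_gt:
  assumes r: "r \<in> words n d" and "p < i" "i < d"
  shows "phiT n d p (act_basis i r) = act_basis (i + 1) (insw n p r)"
proof -
  have len: "length r = d" using r by (simp add: words_def)
  have n1: "insw n p r ! (i + 1 - 1) = r ! (i - 1)"
    using assms len insw_nth_ge[of p "i - 1" r n] by auto
  have n2: "insw n p r ! (i + 1) = r ! i"
    using assms len insw_nth_ge[of p i r n] by auto
  have sw: "swapw (i + 1) (insw n p r) = insw n p (swapw i r)"
    using assms len insw_upd_ge[of p "i - 1" r] insw_upd_ge[of p i] n1 n2
    by (simp add: swapw_def)
  have sww: "swapw i r \<in> words n d" using swapw_words[OF r, of i] assms by simp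
  show ?thesis
    unfolding act_basis_def Let_def n1 n2 sw
    using r sww by (simp add: phiT_basis phiT_scal phiT_add)
qed

lemma key_eq:
  assumes us: "set us \<subseteq> {1..n}" and ws: "set ws \<subseteq> {1..n}" and a: "a \<in> {1..n}" and b: "b \<in> {1..n}"
    and len: "length us + 2 + length ws = d" and p: "p = Suc (length us)"
  shows "phiT n d p (act_basis p (us@a#b#ws)) =
           hact (n+1) (d+1) (basisvec (us @ a # Suc n # b # ws)) (phiv p (Gen p))"
proof -
  have w1: "us@a#b#ws \<in> words n d" "us@b#a#ws \<in> words n d"
    using assms by (auto simp: words_def)
  have i1: "insw n p (us@a#b#ws) = us @ a # Suc n # b # ws"
       "insw n p (us@b#a#ws) = us @ b # Suc n # a # ws"
    using p by (simp_all add: insw_def)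
  have us': "set us \<subseteq> {Suc 0..Suc n}" and ws': "set ws \<subseteq> {Suc 0..Suc n}" using us ws by auto
  consider "a < b" | "a = b" | "b < a" by linarith
  then show ?thesis
  proof cases
    case 1
    then show ?thesis using assms w1 i1 us' ws'
      by (simp add: act_basis_def swapw_def phiT_basis phiT_scal phiT_add
          actT_basis actT_scal actT_add actT_diff words_def nth_append list_update_append;
          simp add: fun_eq_iff algebra_simps)
  next
    case 2
    then show ?thesis using assms w1 i1 us' ws'
      by (simp add: act_basis_def swapw_def phiT_basis phiT_scal phiT_add
          actT_basis actT_scal actT_add actT_diff words_def nth_append list_update_append;
          simp add: fun_eq_iff algebra_simps)
  next
    case 3
    then show ?thesis using assms w1 i1 us' ws'
      by (simp add: act_basis_def swapw_def phiT_basis phiT_scal phiT_add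
          actT_basis actT_scal actT_add actT_diff words_def nth_append list_update_append;
          simp add: fun_eq_iff algebra_simps)
  qed
qed


lemma key_eq_inv:
  assumes us: "set us \<subseteq> {1..n}" and ws: "set ws \<subseteq> {1..n}" and a: "a \<in> {1..n}" and b: "b \<in> {1..n}"
    and len: "length us + 2 + length ws = d" and p: "p = Suc (length us)"
  shows "phiT n d p (\<lambda>s. act_basis p (us@a#b#ws) s - (vv - inverse vv) * basisvec (us@a#b#ws) s) =
           hact (n+1) (d+1) (basisvec (us @ a # Suc n # b # ws)) (phiv p (GenInv p))"
proof -
  have w1: "us@a#b#ws \<in> words n d" "us@b#a#ws \<in> words n d"
    using assms by (auto simp: words_def)
  have i1: "insw n p (us@a#b#ws) = us @ a # Suc n # b # ws"
       "insw n p (us@b#a#ws) = us @ b # Suc n # a # ws"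
    using p by (simp_all add: insw_def)
  have us': "set us \<subseteq> {Suc 0..Suc n}" and ws': "set ws \<subseteq> {Suc 0..Suc n}" using us ws by auto
  consider "a < b" | "a = b" | "b < a" by linarith
  then show ?thesis
  proof cases
    case 1
    then show ?thesis using assms w1 i1 us' ws'
      by (simp add: act_basis_def swapw_def phiT_basis phiT_scal phiT_add phiT_diff
          actT_basis actT_scal actT_add actT_diff words_def nth_append list_update_append;
          simp add: fun_eq_iff algebra_simps)
  next
    case 2
    then show ?thesis using assms w1 i1 us' ws'
      by (simp add: act_basis_def swapw_def phiT_basis phiT_scal phiT_add phiT_diff
          actT_basis actT_scal actT_add actT_diff words_def nth_append list_update_append;
          simp add: fun_eq_iff algebra_simps)
  next
    case 3
    then show ?thesis using assms w1 i1 us' ws'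
      by (simp add: act_basis_def swapw_def phiT_basis phiT_scal phiT_add phiT_diff
          actT_basis actT_scal actT_add actT_diff words_def nth_append list_update_append;
          simp add: fun_eq_iff algebra_simps)
  qed
qed


lemma decomp3: "Suc i < length r \<Longrightarrow> r = take i r @ r ! i # r ! Suc i # drop (Suc (Suc i)) r"
  by (metis Cons_nth_drop_Suc Suc_lessD id_take_nth_drop)

lemma basis_case:
  assumes r: "r \<in> words n d" and p1: "1 \<le> p" and p2: "p \<le> d - 1"
    and g: "g = Gen i \<or> g = GenInv i" and i1: "1 \<le> i" and i2: "i \<le> d - 1"
  shows "phiT n d p (hact n d (basisvec r) g) = hact (n+1) (d+1) (basisvec (insw n p r)) (phiv p g)"
proof -
  have len: "length r = d" using r by (simp add: words_def)
  have iw: "insw n p r \<in> words (n+1) (d+1)" using insw_words[OF r] p2 by simp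
  consider "i < p" | "i = p" | "p < i" by linarith
  then show ?thesis
  proof cases
    case 1
    have k: "phiT n d p (act_basis i r) = act_basis i (insw n p r)"
      using key_lt[OF r i1 1] p2 by simp
    show ?thesis using g 1 k r iw
      by (auto simp: actT_basis phiT_diff phiT_scal phiT_basis)
  next
    case 3
    have k: "phiT n d p (act_basis i r) = act_basis (i+1) (insw n p r)"
      using key_gt[OF r 3] i1 i2 p2 by simp
    show ?thesis using g 3 k r iw
      by (auto simp: actT_basis phiT_diff phiT_scal phiT_basis)
  next
    case 2
    define us where "us = take (p - 1) r"
    define ws where "ws = drop (Suc (Suc (p - 1))) r"
    define a where "a = r ! (p - 1)"
    define b where "b = r ! Suc (p - 1)"
    have req: "r = us @ a # b # ws" unfolding us_def ws_def a_def b_def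
      using decomp3[of "p - 1" r] len p1 p2 by simp
    have lus: "length us = p - 1" using len p1 p2 by (simp add: us_def)
    have pe: "p = Suc (length us)" using lus p1 by simp
    have sets: "set us \<subseteq> {1..n}" "set ws \<subseteq> {1..n}" "a \<in> {1..n}" "b \<in> {1..n}"
      using r unfolding req words_def by auto
    have lens: "length us + 2 + length ws = d" using len req by simp
    have ins: "insw n p r = us @ a # Suc n # b # ws" using pe req by (simp add: insw_def)
    have rw: "r \<in> words n d" by (rule r)
    show ?thesis
    proof (cases "g = Gen i")
      case True
      show ?thesis using key_eq[OF sets lens pe] True 2 rw ins req
        by (simp add: actT_basis)
    next
      case False
      then have gi: "g = GenInv i" using g by simp
      show ?thesis using key_eq_inv[OF sets lens pe] gi 2 rw ins req
        by (simp add: actT_basis)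
    qed
  qed
qed


lemma act_basis_out: "w \<in> words n d \<Longrightarrow> 1 \<le> i \<Longrightarrow> i < d \<Longrightarrow> r \<notin> words n d \<Longrightarrow> act_basis i w r = 0"
  using swapw_words[of w n d i]
  by (auto simp: act_basis_def Let_def basisvec_def)

lemma supp_hact: "supp n d x \<Longrightarrow> hwf d h \<Longrightarrow> supp n d (hact n d x h)"
proof (induction h arbitrary: x)
  case (Gen i)
  then show ?case by (auto simp: supp_def actT_def act_basis_out intro!: sum.neutral)
next
  case (GenInv i)
  then show ?case by (auto simp: supp_def actT_def act_basis_out intro!: sum.neutral)
qed (auto simp: supp_def)

lemma gen_case:
  assumes x: "supp n d x" and p1: "1 \<le> p" and p2: "p \<le> d - 1"
    and g: "g = Gen i \<or> g = GenInv i" and w: "hwf d g"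
  shows "phiT n d p (hact n d x g) = hact (n+1) (d+1) (phiT n d p x) (phiv p g)"
proof -
  have i: "1 \<le> i" "i \<le> d - 1" using g w by auto
  have "phiT n d p (hact n d x g) = phiT n d p (hact n d (\<lambda>s. \<Sum>r\<in>words n d. x r * basisvec r s) g)"
    using supp_expand[OF x] by simp
  also have "\<dots> = (\<lambda>s. \<Sum>r\<in>words n d. x r * phiT n d p (hact n d (basisvec r) g) s)"
    by (simp add: hact_lin phiT_lin)
  also have "\<dots> = (\<lambda>s. \<Sum>r\<in>words n d. x r * hact (n+1) (d+1) (basisvec (insw n p r)) (phiv p g) s)"
    using basis_case[OF _ p1 p2 g i] by simp
  also have "\<dots> = hact (n+1) (d+1) (phiT n d p x) (phiv p g)"
    by (simp add: hact_lin phiT_def)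
  finally show ?thesis .
qed

theorem mainTheorem10:
  fixes n d p :: nat and x :: "nat list \<Rightarrow> qv" and h :: hexp
  assumes "n \<ge> 1" and "d \<ge> 2" and "1 \<le> p" and "p \<le> d - 1"
    and "\<forall>r. r \<notin> words n d \<longrightarrow> x r = 0"
    and "hwf d h"
  shows "phiT n d p (hact n d x h) = hact (n + 1) (d + 1) (phiT n d p x) (phiv p h)"
proof -
  have "supp n d x" using assms(5) by (simp add: supp_def)
  with assms(6) show ?thesis
  proof (induction h arbitrary: x)
    case (Gen i)
    then show ?case using gen_case[OF _ assms(3,4)] by blast
  next
    case (GenInv i)
    then show ?case using gen_case[OF _ assms(3,4)] by blast
  next
    case (Scal c)
    then show ?case by (simp add: phiT_scal)
  next
    case (Add a b)
    then show ?case by (simp add: phiT_add)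
  next
    case (Mul a b)
    then show ?case using supp_hact by simp
  qed
qed

end
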